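(* Let $u_1\ge u_2\ge\cdots\ge u_a\ge 0$ and $w_1\ge w_2\ge\cdots\ge w_b\ge 0$ be two finite non-increasing lists (the unallocated item values and the witness item values), and set $w_r:=0$ for $r>b$. Suppose $u_r\ge w_r$ for all $r\le a$. Let $T\subseteq\{1,\dots,a\}$ and $X\subseteq\{1,\dots,b\}$ be sets of positions, and suppose there is an injective map $f:T\to X$ with $f(t)\le t$ for every $t\in T$. Delete the entries at positions in $T$ from the $u$-list and the entries at positions in $X$ from the $w$-list, and re-index the remaining entries in non-increasing order as $u'_1\ge\cdots\ge u'_{a-|T|}$ and $w'_1\ge\cdots\ge w'_{b-|X|}$ (again with $w'_r:=0$ beyond the end). Then $u'_r\ge w'_r$ for all $r\le a-|T|$.
   Context: In the paper's terminology: $U$ is the set of unallocated items and $W$ the set of items of a witness allocation; $W$ is a witness (for agent $i$) if the $r$-th largest value in $W$ is at most the $r$-th largest value in $U$ for all $r\le|U|$. Given a bundle $T$ allocated from $U$, a bundle $X\subseteq W$ is a dominance bundle for $T$ if there is an injection $f:T\to X$ such that the rank of $f(u)$ in $W$ is at most the rank of $u$ in $U$ for all $u\in T$ (rank 1 = largest). The claim says removing $T$ from $U$ and $X$ from $W$ leaves a witness. *)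

theory Defs
  imports Complex_Main
begin

text \<open>Lists are used with 1-based positions, as in the paper: entry r of xs is xs ! (r - 1).\<close>

definition val1 :: "real list \<Rightarrow> nat \<Rightarrow> real" where
  "val1 xs r = (if 1 \<le> r \<and> r \<le> length xs then xs ! (r - 1) else 0)"

definition delete_pos :: "real list \<Rightarrow> nat set \<Rightarrow> real list" where
  "delete_pos xs P = rev (sort [xs ! (i - 1). i \<leftarrow> [1..<Suc (length xs)], i \<notin> P])"

end

theory Submission
  imports Defs "HOL-Library.Multiset"
begin

lemma comp_map_filter: "[g i. i \<leftarrow> L, P i] = map g (filter P L)"
  by (induction L) auto

lemma rev_sort_id:
  assumes "sorted_wrt (\<ge>) (L::real list)" shows "rev (sort L) = L"
proof -
  have "sorted (rev L)" using assms by (simp add: sorted_wrt_rev)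
  hence "sort L = rev L" by (intro properties_for_sort) auto
  thus ?thesis by simp
qed

lemma card_below:
  fixes xs :: "nat list"
  assumes s: "sorted_wrt (<) xs" and r: "r < length xs"
  shows "card {y \<in> set xs. y \<le> xs ! r} = Suc r"
proof -
  have d: "distinct xs" using s strict_sorted_iff by blast
  have "{y \<in> set xs. y \<le> xs ! r} = (!) xs ` {..r}"
  proof (intro equalityI subsetI)
    fix y assume "y \<in> {y \<in> set xs. y \<le> xs ! r}"
    hence "y \<in> set xs" "y \<le> xs ! r" by auto
    then obtain i where i: "i < length xs" "y = xs ! i" by (auto simp: in_set_conv_nth)
    have "i \<le> r"
    proof (rule ccontr)
      assume "\<not> i \<le> r"
      hence "xs ! r < xs ! i" using s i r by (simp add: sorted_wrt_iff_nth_less)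
      thus False using i \<open>y \<le> xs ! r\<close> by simp
    qed
    thus "y \<in> (!) xs ` {..r}" using i by auto
  next
    fix y assume "y \<in> (!) xs ` {..r}"
    then obtain i where i: "i \<le> r" "y = xs ! i" by auto
    have "xs ! i \<le> xs ! r"
      using s r i by (cases "i = r") (auto simp: sorted_wrt_iff_nth_less less_imp_le)
    thus "y \<in> {y \<in> set xs. y \<le> xs ! r}" using i r by auto
  qed
  moreover have "inj_on ((!) xs) {..r}" using d r by (auto simp: inj_on_def nth_eq_iff_index_eq)
  ultimately show ?thesis by (simp add: card_image)
qed

lemma card_strict_below:
  fixes xs :: "nat list"
  assumes s: "sorted_wrt (<) xs" and r: "r < length xs"
  shows "card {y \<in> set xs. y < xs ! r} = r"
proof -
  have "{y \<in> set xs. y \<le> xs ! r} = insert (xs ! r) {y \<in> set xs. y < xs ! r}"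
    using r by auto
  moreover have "finite {y \<in> set xs. y < xs ! r}" by simp
  ultimately show ?thesis using card_below[OF s r] by simp
qed

lemma sorted_map_pos:
  fixes xs :: "real list" and A :: "nat list"
  assumes s: "sorted_wrt (\<ge>) xs" and A: "sorted_wrt (<) A"
    and rng: "\<forall>i\<in>set A. 1 \<le> i \<and> i \<le> length xs"
  shows "sorted_wrt (\<ge>) (map (\<lambda>i. xs ! (i - 1)) A)"
proof -
  have "xs ! (A ! j - 1) \<le> xs ! (A ! i - 1)" if "i < j" "j < length A" for i j
  proof -
    have "A ! i < A ! j" using A that by (simp add: sorted_wrt_iff_nth_less)
    moreover have "A ! i \<in> set A" "A ! j \<in> set A" using that by auto
    ultimately have "A ! i - 1 < A ! j - 1" "A ! j - 1 < length xs" using rng by force+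
    thus ?thesis using s by (simp add: sorted_wrt_iff_nth_less)
  qed
  thus ?thesis by (simp add: sorted_wrt_iff_nth_less)
qed

lemma delete_pos_eq:
  assumes s: "sorted_wrt (\<ge>) xs"
  shows "delete_pos xs P = map (\<lambda>i. xs ! (i - 1)) (filter (\<lambda>i. i \<notin> P) [1..<Suc (length xs)])"
proof -
  let ?A = "filter (\<lambda>i. i \<notin> P) [1..<Suc (length xs)]"
  have "sorted_wrt (<) ?A" by (intro sorted_wrt_filter sorted_wrt_upt)
  moreover have "\<forall>i\<in>set ?A. 1 \<le> i \<and> i \<le> length xs" by auto
  ultimately have "sorted_wrt (\<ge>) (map (\<lambda>i. xs ! (i - 1)) ?A)"
    using sorted_map_pos[OF s] by blast
  thus ?thesis unfolding delete_pos_def comp_map_filter using rev_sort_id by simp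
qed

theorem proposition3p4:
  fixes u w :: "real list" and T X :: "nat set" and f :: "nat \<Rightarrow> nat"
  assumes u_sorted: "sorted_wrt (\<ge>) u" and u_nonneg: "\<forall>x\<in>set u. x \<ge> 0"
    and w_sorted: "sorted_wrt (\<ge>) w" and w_nonneg: "\<forall>x\<in>set w. x \<ge> 0"
    and dom: "\<forall>r\<in>{1..length u}. val1 u r \<ge> val1 w r"
    and T_sub: "T \<subseteq> {1..length u}" and X_sub: "X \<subseteq> {1..length w}"
    and f_inj: "inj_on f T" and f_into: "f ` T \<subseteq> X"
    and f_le: "\<forall>t\<in>T. f t \<le> t"
  shows "\<forall>r\<in>{1..length u - card T}.
           val1 (delete_pos u T) r \<ge> val1 (delete_pos w X) r"
proof
  fix r assume r: "r \<in> {1..length u - card T}"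
  define a where "a = length u"
  define b where "b = length w"
  define A where "A = filter (\<lambda>i. i \<notin> T) [1..<Suc a]"
  define B where "B = filter (\<lambda>i. i \<notin> X) [1..<Suc b]"
  have Asort: "sorted_wrt (<) A" unfolding A_def by (intro sorted_wrt_filter sorted_wrt_upt)
  have Bsort: "sorted_wrt (<) B" unfolding B_def by (intro sorted_wrt_filter sorted_wrt_upt)
  have setA: "set A = {1..a} - T" unfolding A_def by auto
  have setB: "set B = {1..b} - X" unfolding B_def by auto
  have finT: "finite T" using T_sub finite_subset by blast
  have lenA: "length A = a - card T"
  proof -
    have "length A = card (set A)" using Asort strict_sorted_iff distinct_card by metis
    also have "\<dots> = a - card T" unfolding setA using T_sub a_def
      by (simp add: card_Diff_subset finT)
    finally show ?thesis .
  qed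
  have du: "delete_pos u T = map (\<lambda>i. u ! (i - 1)) A"
    using delete_pos_eq[OF u_sorted] unfolding A_def a_def by simp
  have dw: "delete_pos w X = map (\<lambda>i. w ! (i - 1)) B"
    using delete_pos_eq[OF w_sorted] unfolding B_def b_def by simp
  define k where "k = r - 1"
  have k: "k < length A" "r = Suc k" using r lenA a_def k_def by auto
  define p where "p = A ! k"
  have pA: "p \<in> set A" using k p_def by simp
  hence p: "1 \<le> p" "p \<le> a" "p \<notin> T" using setA by auto
  have vu: "val1 (delete_pos u T) r = u ! (p - 1)"
    using k unfolding du val1_def p_def by simp
  have cA: "card {y \<in> set A. y < p} = k" using card_strict_below[OF Asort k(1)] p_def by simp
  have cB: "card {y \<in> set B. y < p} \<le> k"
  proof -
    have e1: "{y \<in> set A. y < p} = {1..<p} - T" using setA p by auto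
    have e2: "{y \<in> set B. y < p} \<subseteq> {1..<p} - X" using setB by auto
    have c1: "card ({1..<p} - T) = (p - 1) - card ({1..<p} \<inter> T)"
      by (subst card_Diff_subset_Int) auto
    have c2: "card ({1..<p} - X) = (p - 1) - card ({1..<p} \<inter> X)"
      by (subst card_Diff_subset_Int) auto
    have "f ` ({1..<p} \<inter> T) \<subseteq> {1..<p} \<inter> X"
    proof
      fix y assume "y \<in> f ` ({1..<p} \<inter> T)"
      then obtain t where t: "t \<in> T" "t < p" "y = f t" by auto
      have "y \<in> X" using t f_into by auto
      hence "1 \<le> y" using X_sub by auto
      moreover have "y < p" using t f_le by force
      ultimately show "y \<in> {1..<p} \<inter> X" using \<open>y \<in> X\<close> by auto
    qed
    moreover have "inj_on f ({1..<p} \<inter> T)" using f_inj inj_on_subset by blast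
    ultimately have "card ({1..<p} \<inter> T) \<le> card ({1..<p} \<inter> X)"
      using card_inj_on_le by (metis finite_Int finite_atLeastLessThan)
    hence "card ({1..<p} - X) \<le> card ({1..<p} - T)" using c1 c2 by simp
    moreover have "card {y \<in> set B. y < p} \<le> card ({1..<p} - X)"
      using e2 by (intro card_mono) auto
    ultimately show ?thesis using cA e1 by simp
  qed
  show "val1 (delete_pos w X) r \<le> val1 (delete_pos u T) r"
  proof (cases "k < length B")
    case True
    define q where "q = B ! k"
    have qB: "q \<in> set B" using True q_def by simp
    hence q: "1 \<le> q" "q \<le> b" using setB by auto
    have "p \<le> q"
    proof (rule ccontr)
      assume "\<not> p \<le> q"
      hence "{y \<in> set B. y \<le> q} \<subseteq> {y \<in> set B. y < p}" by auto
      hence "card {y \<in> set B. y \<le> q} \<le> card {y \<in> set B. y < p}" by (intro card_mono) auto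
      thus False using card_below[OF Bsort True] q_def cB by simp
    qed
    have vw: "val1 (delete_pos w X) r = w ! (q - 1)"
      using k True unfolding dw val1_def q_def by simp
    have "w ! (q - 1) \<le> w ! (p - 1)"
      using w_sorted \<open>p \<le> q\<close> p q b_def
      by (cases "p = q") (auto simp: sorted_wrt_iff_nth_less)
    moreover have "val1 w p \<le> val1 u p" using dom p a_def by auto
    moreover have "val1 w p = w ! (p - 1)" "val1 u p = u ! (p - 1)"
      using p q \<open>p \<le> q\<close> a_def b_def unfolding val1_def by auto
    ultimately show ?thesis using vu vw by simp
  next
    case False
    hence "val1 (delete_pos w X) r = 0" using k unfolding dw val1_def by simp
    moreover have "u ! (p - 1) \<ge> 0" using u_nonneg p a_def by auto
    ultimately show ?thesis using vu by simp
  qed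
qed

end
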